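(* Let $b>0$. For $R>0$ define, for $r>0$, \[ \begin{aligned} \underline u_{\rm out}(r) &= Lr^{-m} - br^{-l} \log \frac{r}{R},\\ \underline v_{\rm out}(r) &= m(n-2-m)Lr^{-m-2} +\Big[- l(n-2-l) \log \frac{r}{R} + (n-2-2l)\Big]br^{-l-2},\\ \underline w_{\rm out}(r) &= m(m+2)(n-2-m)(n-4-m)Lr^{-m-4} - l(l+2)(n-2-l)(n-4-l)br^{-l-4} \log \frac{r}{R} \\ &\qquad + (n-2-2l)(l+2)(n-4-l) b r^{-l-4}, \end{aligned} \] and \[ \underline r_1 = \sup\{ r>0 : \underline u_{\rm out}(r) \leqslant 0 \},\quad \underline r_2 = \sup\{ r>0 : \underline v_{\rm out}(r) \leqslant 0 \},\quad \underline r_3 = \sup\{ r>0 : \underline w_{\rm out}(r) \leqslant 0 \}. \] Then there exists $R>0$ such that $\underline r_1,\underline r_2,\underline r_3$ are well defined and \[ R<\underline r_1<\underline r_2<\underline r_3<+\infty . \]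
   Context: Let $n\geqslant 15$ and $p=p_{\mathsf{JL}}(6,n)$, where $p_{\mathsf{JL}}(6,n)=\frac{(n+4)\sqrt{3} - \sqrt{\sqrt[3]{K_0+K_1}+ \sqrt[3]{K_0-K_1} + 3n^2+32 }}{(n-8)\sqrt{3} - \sqrt{\sqrt[3]{K_0+K_1} + \sqrt[3]{K_0-K_1} + 3n^2+32 }}$ with $2K_0 =-27n^6+324 n^5-756n^4-2592 n^3 + 25776 n^2 +5184 n -23744$, $2K_1 = \sqrt{(2K_0)^2 - 4(192n^2+256)^3}$. Let $m=6/(p-1)$, $L=\big(m(m+2)(m+4)(n-2-m)(n-4-m)(n-6-m)\big)^{1/(p-1)}$, let $\lambda_3$ be the smallest positive root of $P(\lambda)=(m+\lambda)(m+\lambda+2)(m+\lambda+4)(n-2-m-\lambda)(n-4-m-\lambda)(n-6-m-\lambda)-pL^{p-1}$, and set $l=m+\lambda_3$. *)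

theory Defs
  imports Complex_Main
begin

definition K0 :: "real \<Rightarrow> real" where
  "K0 n = (-27*n^6 + 324*n^5 - 756*n^4 - 2592*n^3 + 25776*n^2 + 5184*n - 23744) / 2"

definition K1 :: "real \<Rightarrow> real" where
  "K1 n = sqrt ((2 * K0 n)^2 - 4 * (192*n^2 + 256)^3) / 2"

(* root 3 is the real cube root (odd root, sign-preserving) *)
definition pJL6 :: "real \<Rightarrow> real" where
  "pJL6 n =
     ((n + 4) * sqrt 3 - sqrt (root 3 (K0 n + K1 n) + root 3 (K0 n - K1 n) + 3*n^2 + 32)) /
     ((n - 8) * sqrt 3 - sqrt (root 3 (K0 n + K1 n) + root 3 (K0 n - K1 n) + 3*n^2 + 32))"

definition mexp :: "real \<Rightarrow> real" where
  "mexp n = 6 / (pJL6 n - 1)"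

definition Lconst :: "real \<Rightarrow> real" where
  "Lconst n = (let m = mexp n in
     (m*(m+2)*(m+4)*(n-2-m)*(n-4-m)*(n-6-m)) powr (1 / (pJL6 n - 1)))"

definition Ppoly :: "real \<Rightarrow> real \<Rightarrow> real" where
  "Ppoly n x = (let m = mexp n in
     (m+x)*(m+x+2)*(m+x+4)*(n-2-m-x)*(n-4-m-x)*(n-6-m-x)
       - pJL6 n * Lconst n powr (pJL6 n - 1))"

definition lam3 :: "real \<Rightarrow> real" where
  "lam3 n = Inf {x. x > 0 \<and> Ppoly n x = 0}"

definition lexp :: "real \<Rightarrow> real" where
  "lexp n = mexp n + lam3 n"

definition u_out :: "real \<Rightarrow> real \<Rightarrow> real \<Rightarrow> real \<Rightarrow> real" where
  "u_out n b R r = (let m = mexp n; l = lexp n; L = Lconst n in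
     L * r powr (-m) - b * r powr (-l) * ln (r / R))"

definition v_out :: "real \<Rightarrow> real \<Rightarrow> real \<Rightarrow> real \<Rightarrow> real" where
  "v_out n b R r = (let m = mexp n; l = lexp n; L = Lconst n in
     m*(n-2-m)*L * r powr (-m-2)
     + (- l*(n-2-l) * ln (r / R) + (n-2-2*l)) * b * r powr (-l-2))"

definition w_out :: "real \<Rightarrow> real \<Rightarrow> real \<Rightarrow> real \<Rightarrow> real" where
  "w_out n b R r = (let m = mexp n; l = lexp n; L = Lconst n in
     m*(m+2)*(n-2-m)*(n-4-m)*L * r powr (-m-4)
     - l*(l+2)*(n-2-l)*(n-4-l)*b * r powr (-l-4) * ln (r / R)
     + (n-2-2*l)*(l+2)*(n-4-l)*b * r powr (-l-4))"

end

theory Submission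
  imports Defs
begin

lemma K0_2: "2 * K0 x = -27*x^6 + 324*x^5 - 756*x^4 - 2592*x^3 + 25776*x^2 + 5184*x - 23744"
  unfolding K0_def by simp

lemma disc_pos:
  fixes x :: real assumes "x \<ge> 15"
  shows "(2 * K0 x)^2 - 4*(192*x^2+256)^3 > 0"
proof -
  define k where "k = x - 15"
  have k: "k \<ge> 0" using assms k_def by simp
  have x: "x = k + 15" using k_def by simp
  have e: "(2 * K0 x)^2 - 4*(192*x^2+256)^3 = 10214160759983817 + 10585461850409628*k^1 + 4894534148604354*k^2 + 1347076448060364*k^3 + 246965545626615*k^4 + 31863611628216*k^5 + 2971699904988*k^6 + 202081266936*k^7 + 9951685191*k^8 + 346289580*k^9 + 8084610*k^10 + 113724*k^11 + 729*k^12"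
    unfolding K0_2 unfolding x by (simp add: eval_nat_numeral algebra_simps)
  have "k^1 \<ge> 0" "k^2 \<ge> 0" "k^3 \<ge> 0" "k^4 \<ge> 0" "k^5 \<ge> 0" "k^6 \<ge> 0" "k^7 \<ge> 0" "k^8 \<ge> 0" "k^9 \<ge> 0" "k^10 \<ge> 0" "k^11 \<ge> 0" "k^12 \<ge> 0"
    using k by simp_all
  then show ?thesis unfolding e by linarith
qed

lemma gx1_pos:
  fixes x :: real assumes "x \<ge> 15"
  shows "(160-48*x)^3 - 3*(192*x^2+256)*(160-48*x) - 2*K0 x > 0"
proof -
  define k where "k = x - 15"
  have k: "k \<ge> 0" using assms k_def by simp
  have x: "x = k + 15" using k_def by simp
  have e: "(160-48*x)^3 - 3*(192*x^2+256)*(160-48*x) - 2*K0 x = 66339 + 22959450*k^1 + 7960869*k^2 + 1058508*k^3 + 67581*k^4 + 2106*k^5 + 27*k^6"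
    unfolding K0_2 unfolding x by (simp add: eval_nat_numeral algebra_simps)
  have "k^1 \<ge> 0" "k^2 \<ge> 0" "k^3 \<ge> 0" "k^4 \<ge> 0" "k^5 \<ge> 0" "k^6 \<ge> 0"
    using k by simp_all
  then show ?thesis unfolding e by linarith
qed

lemma gx0_neg:
  fixes x :: real assumes "x \<ge> 15"
  shows "(-3*x^2-32)^3 - 3*(192*x^2+256)*(-3*x^2-32) - 2*K0 x < 0"
proof -
  define k where "k = x - 15"
  have k: "k \<ge> 0" using assms k_def by simp
  have x: "x = k + 15" using k_def by simp
  have e: "-((-3*x^2-32)^3 - 3*(192*x^2+256)*(-3*x^2-32) - 2*K0 x) = 158546808 + 58825764*k^1 + 8645616*k^2 + 629208*k^3 + 22680*k^4 + 324*k^5"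
    unfolding K0_2 unfolding x by (simp add: eval_nat_numeral algebra_simps)
  have "k^1 \<ge> 0" "k^2 \<ge> 0" "k^3 \<ge> 0" "k^4 \<ge> 0" "k^5 \<ge> 0"
    using k by simp_all
  then show ?thesis using e by linarith
qed

lemma cardano:
  fixes x :: real assumes x15: "x \<ge> 15"
  defines "c \<equiv> root 3 (K0 x + K1 x) + root 3 (K0 x - K1 x)"
  shows "c^3 - 3*(192*x^2+256)*c - 2*K0 x = 0"
proof -
  define Q where "Q = 192*x^2+256"
  define D where "D = (2 * K0 x)^2 - 4*Q^3"
  have D: "D > 0" using disc_pos[OF x15] unfolding D_def Q_def by simp
  have K1: "K1 x = sqrt D / 2" unfolding K1_def D_def Q_def by simp
  have K1sq: "(K1 x)^2 = D/4" unfolding K1 using D by (simp add: power_divide)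
  have AB: "(K0 x + K1 x) * (K0 x - K1 x) = Q^3"
  proof -
    have "(K0 x + K1 x) * (K0 x - K1 x) = (K0 x)^2 - (K1 x)^2" by (simp add: algebra_simps power2_eq_square)
    also have "\<dots> = Q^3" unfolding K1sq D_def by (simp add: power2_eq_square field_simps)
    finally show ?thesis .
  qed
  define ra where "ra = root 3 (K0 x + K1 x)"
  define rb where "rb = root 3 (K0 x - K1 x)"
  have Qp: "Q \<ge> 0" unfolding Q_def by simp
  have rab: "ra * rb = Q"
    unfolding ra_def rb_def real_root_mult[symmetric] AB
    using Qp by (simp add: real_root_power_cancel)
  have ra3: "ra^3 = K0 x + K1 x" unfolding ra_def by (simp add: odd_real_root_pow)
  have rb3: "rb^3 = K0 x - K1 x" unfolding rb_def by (simp add: odd_real_root_pow)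
  have cc: "c = ra + rb" unfolding c_def ra_def rb_def by simp
  have "c^3 = ra^3 + rb^3 + 3*(ra*rb)*(ra+rb)" unfolding cc by (simp add: algebra_simps power3_eq_cube)
  also have "\<dots> = 2 * K0 x + 3*Q*c" unfolding ra3 rb3 rab cc by simp
  finally show ?thesis unfolding Q_def by simp
qed

lemma cubic_bounds:
  fixes x c :: real assumes x: "x \<ge> 15" and g: "c^3 - 3*(192*x^2+256)*c - 2*K0 x = 0"
  shows "-3*x^2-32 < c" "c < 160-48*x"
proof -
  define Q where "Q = 192*x^2+256"
  have key: "\<And>y. y^2 > 4*Q \<Longrightarrow> (y^3 - 3*Q*y - 2*K0 x) = (y - c)*((c + y/2)^2 + 3/4*y^2 - 3*Q)"
  proof -
    fix y
    have "(y^3 - 3*Q*y - 2*K0 x) = (y^3 - 3*Q*y - 2*K0 x) - (c^3 - 3*Q*c - 2*K0 x)" using g unfolding Q_def by simp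
    also have "\<dots> = (y - c)*((c + y/2)^2 + 3/4*y^2 - 3*Q)" by (simp add: algebra_simps power2_eq_square power3_eq_cube)
    finally show "(y^3 - 3*Q*y - 2*K0 x) = (y - c)*((c + y/2)^2 + 3/4*y^2 - 3*Q)" .
  qed
  have qpos: "\<And>y. y^2 > 4*Q \<Longrightarrow> (c + y/2)^2 + 3/4*y^2 - 3*Q > 0"
  proof -
    fix y :: real assume "y^2 > 4*Q"
    moreover have "(c + y/2)^2 \<ge> 0" by simp
    ultimately show "(c + y/2)^2 + 3/4*y^2 - 3*Q > 0" by linarith
  qed
  have xx: "x*x \<ge> 15*x" using x by (intro mult_right_mono) auto
  have "(160-48*x)^2 - 4*Q = 1536*(x*x) - 15360*x + 24576" unfolding Q_def
    by (simp add: power2_eq_square algebra_simps)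
  hence y1: "(160-48*x)^2 > 4*Q" using xx x by linarith
  have x64: "x*x > 64" using xx x by linarith
  have "(-3*x^2-32)^2 - 4*Q = 9*(x*x)*((x*x) - 64)" unfolding Q_def
    by (simp add: power2_eq_square algebra_simps)
  moreover have "9*(x*x)*((x*x) - 64) > 0" using x64 x by (intro mult_pos_pos) auto
  ultimately have y0: "(-3*x^2-32)^2 > 4*Q" by linarith
  show "c < 160-48*x"
  proof (rule ccontr)
    assume "\<not> c < 160 - 48*x"
    hence "(160-48*x) - c \<le> 0" by simp
    moreover have "(c + (160-48*x)/2)^2 + 3/4*(160-48*x)^2 - 3*Q > 0" using qpos[OF y1] .
    ultimately have "((160-48*x) - c) * ((c + (160-48*x)/2)^2 + 3/4*(160-48*x)^2 - 3*Q) \<le> 0"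
      by (simp add: mult_nonpos_nonneg)
    with key[OF y1] gx1_pos[OF x] show False unfolding Q_def by simp
  qed
  show "-3*x^2-32 < c"
  proof (rule ccontr)
    assume "\<not> -3*x^2-32 < c"
    hence "(-3*x^2-32) - c \<ge> 0" by simp
    moreover have "(c + (-3*x^2-32)/2)^2 + 3/4*(-3*x^2-32)^2 - 3*Q > 0" using qpos[OF y0] .
    ultimately have "((-3*x^2-32) - c) * ((c + (-3*x^2-32)/2)^2 + 3/4*(-3*x^2-32)^2 - 3*Q) \<ge> 0"
      by simp
    with key[OF y0] gx0_neg[OF x] show False unfolding Q_def by simp
  qed
qed

lemma cubic_identity:
  fixes x c z :: real assumes g: "c^3 - 3*(192*x^2+256)*c - 2*K0 x = 0"
    and z: "z = (c + 3*x^2 + 32)/3"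
  shows "((x+4)^2-z)*((x-4)^2-z)*(x^2-z) = ((x-6)*(x-2)*(x+2))^2"
proof -
  have "((x+4)^2-z)*((x-4)^2-z)*(x^2-z) - ((x-6)*(x-2)*(x+2))^2 = -(c^3 - 3*(192*x^2+256)*c - 2*K0 x)/27"
    unfolding z K0_2 by (simp add: field_simps eval_nat_numeral)
  with g show ?thesis by simp
qed

lemma s_exists:
  fixes x :: real assumes x: "x \<ge> 15"
  shows "\<exists>s. 0 \<le> s \<and> s < x - 8 \<and> pJL6 x = (x+4-s)/(x-8-s) \<and>
     ((x+4)^2-s^2)*((x-4)^2-s^2)*(x^2-s^2) = ((x-6)*(x-2)*(x+2))^2"
proof -
  define c where "c = root 3 (K0 x + K1 x) + root 3 (K0 x - K1 x)"
  have g: "c^3 - 3*(192*x^2+256)*c - 2*K0 x = 0" using cardano[OF x] unfolding c_def by simp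
  note b = cubic_bounds[OF x g]
  define S where "S = c + 3*x^2 + 32"
  have S0: "S > 0" using b(1) unfolding S_def by simp
  have S1: "S < 3*(x-8)^2" using b(2) unfolding S_def by (simp add: power2_eq_square algebra_simps)
  define s where "s = sqrt S / sqrt 3"
  have s0: "s \<ge> 0" unfolding s_def using S0 by simp
  have ws: "sqrt S = s * sqrt 3" unfolding s_def by simp
  have "sqrt S < sqrt (3*(x-8)^2)" using S1 by simp
  also have "sqrt (3*(x-8)^2) = sqrt 3 * (x-8)" using x by (simp add: real_sqrt_mult)
  finally have "s * sqrt 3 < (x-8) * sqrt 3" unfolding ws by (simp add: mult.commute)
  hence s1: "s < x - 8" by simp
  have ssq: "s^2 = (c + 3*x^2 + 32)/3" unfolding s_def using S0 by (simp add: power_divide S_def)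
  have p: "pJL6 x = (x+4-s)/(x-8-s)"
  proof -
    have "pJL6 x = ((x + 4) * sqrt 3 - s * sqrt 3) / ((x - 8) * sqrt 3 - s * sqrt 3)"
      unfolding pJL6_def c_def[symmetric] S_def[symmetric] ws ..
    also have "\<dots> = ((x+4-s) * sqrt 3) / ((x-8-s) * sqrt 3)" by (simp add: algebra_simps)
    also have "\<dots> = (x+4-s)/(x-8-s)" by simp
    finally show ?thesis .
  qed
  show ?thesis using s0 s1 p cubic_identity[OF g ssq] by blast
qed

definition ff :: "real \<Rightarrow> real \<Rightarrow> real" where
  "ff x y = y*(y+2)*(y+4)*(x-2-y)*(x-4-y)*(x-6-y)"

lemma ff_sym:
  fixes x y :: real
  shows "ff x y = (((x-6)/2)^2 - ((x-6)/2 - y)^2) * (((x-6)/2+2)^2 - ((x-6)/2 - y)^2) * (((x-6)/2+4)^2 - ((x-6)/2 - y)^2)"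
  unfolding ff_def by (simp add: field_simps power2_eq_square)

lemma ff_lt:
  fixes x y :: real assumes "0 < y" "y < (x-6)/2"
  shows "ff x y < ff x ((x-6)/2)"
proof -
  define a where "a = (x-6)/2"
  define d where "d = a - y"
  have d: "0 < d" "d < a" using assms unfolding a_def d_def by linarith+
  have e1: "ff x y = (a^2 - d^2)*((a+2)^2-d^2)*((a+4)^2-d^2)" unfolding ff_sym a_def d_def ..
  have e2: "ff x ((x-6)/2) = a^2*(a+2)^2*(a+4)^2" unfolding ff_sym a_def by simp
  have dd: "d^2 > 0" "d^2 < a^2" using d by (auto intro: power_strict_mono)
  have "d^2 < (a+2)^2" "d^2 < (a+4)^2" using d by (auto intro!: power_strict_mono)
  have "(a^2 - d^2)*((a+2)^2-d^2) < a^2*(a+2)^2"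
    using dd \<open>d^2 < (a+2)^2\<close> by (intro mult_strict_mono) auto
  moreover have "(a^2 - d^2)*((a+2)^2-d^2) \<ge> 0" using dd \<open>d^2 < (a+2)^2\<close> by simp
  ultimately have "(a^2 - d^2)*((a+2)^2-d^2)*((a+4)^2-d^2) < a^2*(a+2)^2*(a+4)^2"
    using dd \<open>d^2 < (a+4)^2\<close> \<open>d^2 < (a+2)^2\<close> d by (intro mult_strict_mono) auto
  then show ?thesis unfolding e1 e2 .
qed

lemma params:
  fixes x :: real assumes x: "x \<ge> 15"
  shows "0 < mexp x" "mexp x < (x-6)/2" "lexp x = (x-6)/2" "Lconst x > 0"
proof -
  obtain s where s0: "0 \<le> s" and s1: "s < x - 8" and p: "pJL6 x = (x+4-s)/(x-8-s)"
    and id: "((x+4)^2-s^2)*((x-4)^2-s^2)*(x^2-s^2) = ((x-6)*(x-2)*(x+2))^2"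
    using s_exists[OF x] by blast
  have ne: "x - 8 - s \<noteq> 0" using s1 by simp
  have p1: "pJL6 x - 1 = 12/(x-8-s)" unfolding p using ne by (simp add: field_simps)
  have "12/(x-8-s) > 0" using s1 by simp
  hence pg: "pJL6 x > 1" using p1 by linarith
  have m: "mexp x = (x-8-s)/2" unfolding mexp_def p1 using ne by simp
  show m0: "0 < mexp x" using m s1 by simp
  show ma: "mexp x < (x-6)/2" using m s0 by simp
  define mm where "mm = mexp x"
  define base where "base = ff x mm"
  have base: "base > 0" unfolding base_def ff_def using m0 ma x unfolding mm_def by simp
  have pf: "pJL6 x * base = ff x ((x-6)/2)"
  proof -
    have "pJL6 x * base = ((x+4)^2-s^2)*((x-4)^2-s^2)*(x^2-s^2) / 64"
      unfolding base_def mm_def m p ff_def using ne by (simp add: field_simps power2_eq_square)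
    also have "\<dots> = ff x ((x-6)/2)" unfolding id ff_def by (simp add: field_simps power2_eq_square)
    finally show ?thesis .
  qed
  have L: "Lconst x = base powr (1 / (pJL6 x - 1))"
    unfolding Lconst_def Let_def base_def ff_def mm_def ..
  show "Lconst x > 0" unfolding L using base by simp
  have LL: "Lconst x powr (pJL6 x - 1) = base"
    unfolding L powr_powr using pg base by simp
  have P: "Ppoly x t = ff x (mm + t) - ff x ((x-6)/2)" for t
    unfolding Ppoly_def Let_def mm_def[symmetric] LL pf ff_def[of x "mm+t"] by (simp add: algebra_simps)
  define T where "T = {t. t > 0 \<and> Ppoly x t = 0}"
  have inT: "(x-6)/2 - mm \<in> T" unfolding T_def P using ma unfolding mm_def by simp
  have low: "\<And>t. t \<in> T \<Longrightarrow> (x-6)/2 - mm \<le> t"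
  proof (rule ccontr)
    fix t assume t: "t \<in> T" "\<not> (x-6)/2 - mm \<le> t"
    have t0: "0 < mm + t" using t m0 unfolding T_def mm_def by simp
    have t1: "mm + t < (x-6)/2" using t(2) by linarith
    have "ff x (mm + t) < ff x ((x-6)/2)" using t0 t1 by (rule ff_lt)
    then show False using t(1) unfolding T_def P by simp
  qed
  have "lam3 x = (x-6)/2 - mm" unfolding lam3_def T_def[symmetric] using inT low by (rule cInf_eq_minimum)
  then show "lexp x = (x-6)/2" unfolding lexp_def mm_def by simp
qed

lemma beyond:
  fixes f :: "real \<Rightarrow> real"
  assumes "isCont f s" "f s < 0"
  shows "\<exists>r>s. f r < 0"
proof -
  have "eventually (\<lambda>y. f y < 0) (at s)"
    using assms by (metis isCont_def order_tendstoD(2))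
  then obtain d where d: "d > 0" "\<And>y. y \<noteq> s \<Longrightarrow> dist y s < d \<Longrightarrow> f y < 0"
    unfolding eventually_at by blast
  have "f (s + d/2) < 0" using d by (intro d(2)) (auto simp: dist_real_def)
  moreover have "s + d/2 > s" using d by simp
  ultimately show ?thesis by blast
qed

lemma near_pos:
  fixes f :: "real \<Rightarrow> real"
  assumes "isCont f s" "f s > 0"
  shows "\<exists>d>0. \<forall>y. \<bar>y - s\<bar> < d \<longrightarrow> f y > 0"
proof -
  have "eventually (\<lambda>y. f y > 0) (at s)"
    using assms by (metis isCont_def order_tendstoD(1))
  then obtain d where d: "d > 0" "\<And>y. y \<noteq> s \<Longrightarrow> dist y s < d \<Longrightarrow> f y > 0"
    unfolding eventually_at by blast
  show ?thesis using d assms(2) by (intro exI[of _ d]) (metis dist_real_def)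
qed

lemma sup_zero:
  fixes f :: "real \<Rightarrow> real"
  assumes cont: "\<And>r. r > 0 \<Longrightarrow> isCont f r"
    and ne: "{r. 0 < r \<and> f r \<le> 0} \<noteq> {}" and bdd: "bdd_above {r. 0 < r \<and> f r \<le> 0}"
  shows "0 < Sup {r. 0 < r \<and> f r \<le> 0}" "f (Sup {r. 0 < r \<and> f r \<le> 0}) = 0"
proof -
  define S where "S = {r. 0 < r \<and> f r \<le> 0}"
  obtain r0 where r0: "r0 \<in> S" using ne unfolding S_def by blast
  have up: "\<And>r. r \<in> S \<Longrightarrow> r \<le> Sup S" using bdd unfolding S_def by (intro cSup_upper) auto
  have r0p: "r0 > 0" using r0 unfolding S_def by simp
  show sp: "0 < Sup {r. 0 < r \<and> f r \<le> 0}" using up[OF r0] r0p unfolding S_def by simp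
  hence sp': "0 < Sup S" unfolding S_def .
  have "\<not> f (Sup S) < 0"
  proof
    assume "f (Sup S) < 0"
    then obtain r where r: "r > Sup S" "f r < 0" using beyond cont[OF sp'] by blast
    hence "r \<in> S" using sp' unfolding S_def by simp
    with up r show False by fastforce
  qed
  moreover have "\<not> f (Sup S) > 0"
  proof
    assume "f (Sup S) > 0"
    then obtain d where d: "d > 0" "\<And>y. \<bar>y - Sup S\<bar> < d \<Longrightarrow> f y > 0"
      using near_pos cont[OF sp'] by blast
    have "\<And>r. r \<in> S \<Longrightarrow> r \<le> Sup S - d"
    proof (rule ccontr)
      fix r assume r: "r \<in> S" "\<not> r \<le> Sup S - d"
      have "\<bar>r - Sup S\<bar> < d" using up[OF r(1)] r(2) by simp
      hence "f r > 0" using d by simp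
      with r(1) show False unfolding S_def by simp
    qed
    hence "Sup S \<le> Sup S - d" using r0 by (intro cSup_least) auto
    with d show False by simp
  qed
  ultimately show "f (Sup {r. 0 < r \<and> f r \<le> 0}) = 0" unfolding S_def by simp
qed

lemma growth:
  fixes k A b R :: real
  assumes k: "k > 0" and A: "A > 0" and b: "b > 0" and R: "R > 0"
  shows "\<exists>N>0. \<forall>r\<ge>N. A * r powr k > b * ln (r / R)"
proof -
  define h where "h = k/2"
  have h: "h > 0" using k h_def by simp
  define K where "K = b / (h*A) / R powr h"
  have K: "K > 0" using h A b R unfolding K_def by simp
  define N where "N = max 1 (K powr (1/h))"
  have N: "N > 0" unfolding N_def by simp
  have NK: "N powr h \<ge> K"
  proof -
    have "K = (K powr (1/h)) powr h" using K h by (simp add: powr_powr)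
    also have "\<dots> \<le> N powr h" unfolding N_def using h by (intro powr_mono2) auto
    finally show ?thesis .
  qed
  have "\<forall>r\<ge>N. A * r powr k > b * ln (r / R)"
  proof (intro allI impI)
    fix r assume rN: "r \<ge> N"
    have r: "r > 0" using rN N by simp
    have rh: "r powr h \<ge> K" using NK powr_mono2[of h N r] rN N h by simp
    have lnb: "h * ln (r/R) < (r/R) powr h"
    proof -
      have "h * ln (r/R) = ln ((r/R) powr h)" using r R by (simp add: ln_powr)
      also have "\<dots> < (r/R) powr h" using r R by (intro ln_less_self) simp
      finally show ?thesis .
    qed
    have "b * ln (r / R) = (b/h) * (h * ln (r/R))" using h by simp
    also have "\<dots> < (b/h) * ((r/R) powr h)" using lnb b h by (intro mult_strict_left_mono) auto
    also have "\<dots> = (b/h) / R powr h * r powr h" using r R by (simp add: powr_divide)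
    also have "\<dots> = A * K * r powr h" unfolding K_def using A h by simp
    also have "\<dots> \<le> A * r powr h * r powr h" using rh A r
      by (simp add: mult.assoc mult_left_mono mult_right_mono)
    also have "\<dots> = A * r powr k" unfolding h_def using r by (simp add: mult.assoc powr_add[symmetric])
    finally show "A * r powr k > b * ln (r / R)" .
  qed
  with N show ?thesis by blast
qed

lemma generic:
  fixes u v w :: "real \<Rightarrow> real \<Rightarrow> real" and m l L b :: real
  assumes m0: "0 < m" and ml: "m < l" and L0: "L > 0" and b0: "b > 0"
  and u: "\<And>R r. u R r = L * r powr (-m) - b * r powr (-l) * ln (r/R)"
  and v: "\<And>R r. v R r = m*(2*l+4-m)*L * r powr (-m-2) + (-l*(l+4)*ln(r/R) + 4)*b*r powr(-l-2)"
  and w: "\<And>R r. w R r = m*(m+2)*(2*l+4-m)*(2*l+2-m)*L*r powr(-m-4) - l*(l+2)*(l+4)*(l+2)*b*r powr(-l-4)*ln(r/R) + 4*(l+2)*(l+2)*b*r powr(-l-4)"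
  shows "\<exists>R>0.
    {r. r > 0 \<and> u R r \<le> 0} \<noteq> {} \<and> bdd_above {r. r > 0 \<and> u R r \<le> 0} \<and>
    {r. r > 0 \<and> v R r \<le> 0} \<noteq> {} \<and> bdd_above {r. r > 0 \<and> v R r \<le> 0} \<and>
    {r. r > 0 \<and> w R r \<le> 0} \<noteq> {} \<and> bdd_above {r. r > 0 \<and> w R r \<le> 0} \<and>
    R < Sup {r. r > 0 \<and> u R r \<le> 0} \<and>
    Sup {r. r > 0 \<and> u R r \<le> 0} < Sup {r. r > 0 \<and> v R r \<le> 0} \<and>
    Sup {r. r > 0 \<and> v R r \<le> 0} < Sup {r. r > 0 \<and> w R r \<le> 0}"
proof -
  define k where "k = l - m"
  have k: "k > 0" using ml k_def by simp
  define \<alpha> where "\<alpha> = m*(2*l+4-m)"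
  define \<beta> where "\<beta> = l*(l+4)"
  define a2 where "a2 = (m+2)*(2*l+2-m)"
  define \<gamma> where "\<gamma> = \<alpha>*a2"
  define \<delta> where "\<delta> = \<beta>*(l+2)*(l+2)"
  define \<epsilon> where "\<epsilon> = 4*(l+2)*(l+2)"
  have \<alpha>: "\<alpha> > 0" unfolding \<alpha>_def using m0 ml by simp
  have \<beta>: "\<beta> > 0" unfolding \<beta>_def using m0 ml by simp
  have a2: "a2 > 0" unfolding a2_def using m0 ml by simp
  have \<gamma>: "\<gamma> > 0" unfolding \<gamma>_def using \<alpha> a2 by simp
  have \<delta>: "\<delta> > 0" unfolding \<delta>_def using \<beta> m0 ml by simp
  have \<epsilon>: "\<epsilon> > 0" unfolding \<epsilon>_def using m0 ml by simp
  have ba: "\<beta> - \<alpha> = k*(k+4)" unfolding \<alpha>_def \<beta>_def k_def by (simp add: algebra_simps)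
  have a2l: "a2 - (l+2)*(l+2) = -(k*k)" unfolding a2_def k_def by (simp add: algebra_simps)
  have pw: "r powr (-m) = r powr (-l) * r powr k" "r powr (-m-2) = r powr (-l-2) * r powr k"
     "r powr (-m-4) = r powr (-l-4) * r powr k" for r
    unfolding k_def by (simp_all add: powr_add[symmetric] algebra_simps)
  have uE: "u R r = r powr (-l) * (L * r powr k - b * ln(r/R))" for R r
    unfolding u pw by (simp add: algebra_simps)
  have vE: "v R r = r powr (-l-2) * (\<alpha>*L*r powr k + b*(4 - \<beta>*ln(r/R)))" for R r
    unfolding v pw \<alpha>_def \<beta>_def by (simp add: algebra_simps)
  have wE: "w R r = r powr (-l-4) * (\<gamma>*L*r powr k - \<delta>*b*ln(r/R) + \<epsilon>*b)" for R r
    unfolding w pw \<gamma>_def \<alpha>_def a2_def \<delta>_def \<beta>_def \<epsilon>_def by (simp add: algebra_simps)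
  have cu: "isCont (u R) r" if "R > 0" "r > 0" for R r
  proof -
    have "u R = (\<lambda>r. L * r powr (-m) - b * r powr (-l) * ln (r/R))" by (rule ext) (rule u)
    then show ?thesis using that by simp (intro continuous_intros; auto)
  qed
  have cv: "isCont (v R) r" if "R > 0" "r > 0" for R r
  proof -
    have "v R = (\<lambda>r. m*(2*l+4-m)*L * r powr (-m-2) + (-l*(l+4)*ln(r/R) + 4)*b*r powr(-l-2))" by (rule ext) (rule v)
    then show ?thesis using that by simp (intro continuous_intros; auto)
  qed
  have cw: "isCont (w R) r" if "R > 0" "r > 0" for R r
  proof -
    have "w R = (\<lambda>r. m*(m+2)*(2*l+4-m)*(2*l+2-m)*L*r powr(-m-4) - l*(l+2)*(l+4)*(l+2)*b*r powr(-l-4)*ln(r/R) + 4*(l+2)*(l+2)*b*r powr(-l-4))" by (rule ext) (rule w)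
    then show ?thesis using that by simp (intro continuous_intros; auto)
  qed
  have bu: "bdd_above {r. r > 0 \<and> u R r \<le> 0}" if R: "R > 0" for R
  proof -
    obtain N where N: "N > 0" "\<forall>r\<ge>N. L * r powr k > b * ln (r / R)" using growth[OF k L0 b0 R] by blast
    have "r \<le> N" if "r > 0" "u R r \<le> 0" for r
    proof (rule ccontr)
      assume "\<not> r \<le> N"
      hence "L * r powr k - b * ln (r / R) > 0" using N by simp
      hence "u R r > 0" unfolding uE using that by simp
      with that show False by simp
    qed
    then show ?thesis by (intro bdd_aboveI[of _ N]) auto
  qed
  have bv: "bdd_above {r. r > 0 \<and> v R r \<le> 0}" if R: "R > 0" for R
  proof -
    have A: "\<alpha>*L/\<beta> > 0" using \<alpha> \<beta> L0 by simp
    obtain N where N: "N > 0" "\<forall>r\<ge>N. \<alpha>*L/\<beta> * r powr k > b * ln (r / R)" using growth[OF k A b0 R] by blast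
    have "r \<le> N" if "r > 0" "v R r \<le> 0" for r
    proof (rule ccontr)
      assume "\<not> r \<le> N"
      hence "\<alpha>*L/\<beta> * r powr k > b * ln (r / R)" using N by simp
      hence "\<beta> * (\<alpha>*L/\<beta> * r powr k) > \<beta> * (b * ln (r / R))" using \<beta> by (intro mult_strict_left_mono) auto
      hence "\<alpha>*L* r powr k > \<beta> * b * ln (r / R)" using \<beta> by simp
      hence "\<alpha>*L*r powr k + b*(4 - \<beta>*ln(r/R)) > 0" using b0 by (simp add: algebra_simps)
      hence "v R r > 0" unfolding vE using that by simp
      with that show False by simp
    qed
    then show ?thesis by (intro bdd_aboveI[of _ N]) auto
  qed
  have bw: "bdd_above {r. r > 0 \<and> w R r \<le> 0}" if R: "R > 0" for R
  proof -
    have A: "\<gamma>*L/\<delta> > 0" using \<gamma> \<delta> L0 by simp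
    obtain N where N: "N > 0" "\<forall>r\<ge>N. \<gamma>*L/\<delta> * r powr k > b * ln (r / R)" using growth[OF k A b0 R] by blast
    have "r \<le> N" if "r > 0" "w R r \<le> 0" for r
    proof (rule ccontr)
      assume "\<not> r \<le> N"
      hence "\<gamma>*L/\<delta> * r powr k > b * ln (r / R)" using N by simp
      hence "\<delta> * (\<gamma>*L/\<delta> * r powr k) > \<delta> * (b * ln (r / R))" using \<delta> by (intro mult_strict_left_mono) auto
      hence "\<gamma>*L* r powr k > \<delta> * b * ln (r / R)" using \<delta> by simp
      moreover have "\<epsilon>*b > 0" using \<epsilon> b0 by simp
      ultimately have "\<gamma>*L*r powr k - \<delta>*b*ln(r/R) + \<epsilon>*b > 0" by simp
      hence "w R r > 0" unfolding wE using that by simp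
      with that show False by simp
    qed
    then show ?thesis by (intro bdd_aboveI[of _ N]) auto
  qed
  define S0 where "S0 = 4/(k*(k+4)) + 1"
  have q: "k*(k+4) > 0" using k by simp
  have S0a: "S0 > 0" unfolding S0_def using q by (simp add: add_pos_pos)
  have "k*(k+4)*S0 = 4 + k*(k+4)" unfolding S0_def using q by (simp add: field_simps)
  hence S0: "S0 > 0" "k*(k+4)*S0 > 4" using q S0a by simp_all
  define rs where "rs = (b*S0/L) powr (1/k)"
  define R where "R = rs / exp S0"
  have rs: "rs > 0" unfolding rs_def using b0 S0 L0 by simp
  have R: "R > 0" unfolding R_def using rs by simp
  have rsR: "rs / R = exp S0" unfolding R_def using rs by simp
  have rsk: "rs powr k = b*S0/L" unfolding rs_def using k b0 S0 L0 by (simp add: powr_powr)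
  have Rrs: "R < rs" unfolding R_def using rs S0 by (simp add: field_simps)
  have urs: "u R rs = 0" unfolding uE rsR rsk using L0 by simp
  define Su where "Su = {r. r > 0 \<and> u R r \<le> 0}"
  define Sv where "Sv = {r. r > 0 \<and> v R r \<le> 0}"
  define Sw where "Sw = {r. r > 0 \<and> w R r \<le> 0}"
  have rsSu: "rs \<in> Su" unfolding Su_def using rs urs by simp
  have neu: "Su \<noteq> {}" using rsSu by blast
  have bu': "bdd_above Su" unfolding Su_def using bu[OF R] .
  have bv': "bdd_above Sv" unfolding Sv_def using bv[OF R] .
  have bw': "bdd_above Sw" unfolding Sw_def using bw[OF R] .
  have cu': "\<And>r. 0 < r \<Longrightarrow> isCont (u R) r" using cu R by blast
  have cv': "\<And>r. 0 < r \<Longrightarrow> isCont (v R) r" using cv R by blast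
  have z1: "0 < Sup Su" "u R (Sup Su) = 0"
    using sup_zero[of "u R", OF cu'] neu bu' unfolding Su_def by auto
  define r1 where "r1 = Sup Su"
  have r1: "r1 > 0" "u R r1 = 0" using z1 unfolding r1_def by auto
  have r1rs: "rs \<le> r1" unfolding r1_def using rsSu bu' by (rule cSup_upper)
  have Rr1: "R < r1" using Rrs r1rs by simp
  define s1 where "s1 = ln (r1/R)"
  have s1: "s1 \<ge> S0"
  proof -
    have "S0 = ln (rs/R)" unfolding rsR by simp
    also have "\<dots> \<le> ln (r1/R)" using rs R r1rs by (simp add: divide_right_mono)
    finally show ?thesis unfolding s1_def .
  qed
  have X1: "L * r1 powr k = b * s1" using r1 unfolding uE s1_def by simp
  have "k*(k+4)*s1 \<ge> k*(k+4)*S0" using s1 k by (intro mult_left_mono) auto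
  hence "(\<beta>-\<alpha>)*s1 > 4" using S0 ba by simp
  hence "4 - (\<beta>-\<alpha>)*s1 < 0" by simp
  hence "b*(4 - (\<beta>-\<alpha>)*s1) < 0" using b0 by (simp add: mult_pos_neg)
  moreover have "\<alpha>*L*r1 powr k + b*(4 - \<beta>*ln(r1/R)) = b*(4 - (\<beta>-\<alpha>)*s1)"
    using X1 unfolding s1_def[symmetric] by (simp add: algebra_simps)
  ultimately have "v R r1 < 0" unfolding vE using r1 by (simp add: mult_pos_neg)
  then obtain rv where rv: "rv > r1" "v R rv < 0" using beyond cv[OF R r1(1)] by blast
  have rvS: "rv \<in> Sv" unfolding Sv_def using rv r1 by simp
  have nev: "Sv \<noteq> {}" using rvS by blast
  have z2: "0 < Sup Sv" "v R (Sup Sv) = 0"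
    using sup_zero[of "v R", OF cv'] nev bv' unfolding Sv_def by auto
  define r2 where "r2 = Sup Sv"
  have r2: "r2 > 0" "v R r2 = 0" using z2 unfolding r2_def by auto
  have r12: "r1 < r2" using rv cSup_upper[OF rvS bv'] unfolding r2_def by simp
  define s2 where "s2 = ln (r2/R)"
  define Y where "Y = \<alpha>*L*r2 powr k"
  have Y: "Y > 0" unfolding Y_def using \<alpha> L0 r2 by simp
  have "\<alpha>*L*r2 powr k + b*(4 - \<beta>*s2) = 0" using r2 unfolding vE s2_def by simp
  hence Ye: "Y = b*(\<beta>*s2 - 4)" unfolding Y_def by (simp add: algebra_simps)
  have "\<beta>*s2 - 4 > 0" using Y b0 Ye by (simp add: zero_less_mult_iff)
  have "\<gamma>*L*r2 powr k - \<delta>*b*ln(r2/R) + \<epsilon>*b = a2 * Y - \<delta>*b*s2 + \<epsilon>*b"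
    unfolding Y_def \<gamma>_def s2_def by (simp add: algebra_simps)
  also have "\<dots> = b*(\<beta>*s2 - 4)*(a2 - (l+2)*(l+2))"
    unfolding Ye \<delta>_def \<epsilon>_def by (simp add: algebra_simps)
  also have "\<dots> = - (b*(\<beta>*s2 - 4)*(k*k))" unfolding a2l by simp
  finally have "\<gamma>*L*r2 powr k - \<delta>*b*ln(r2/R) + \<epsilon>*b < 0"
    using b0 \<open>\<beta>*s2 - 4 > 0\<close> k by simp
  hence "w R r2 < 0" unfolding wE using r2 by (simp add: mult_pos_neg)
  then obtain rw where rw: "rw > r2" "w R rw < 0" using beyond cw[OF R r2(1)] by blast
  have rwS: "rw \<in> Sw" unfolding Sw_def using rw r2 by simp
  have new: "Sw \<noteq> {}" using rwS by blast
  have r23: "r2 < Sup Sw" using rw cSup_upper[OF rwS bw'] by simp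
  show ?thesis
    apply (rule exI[of _ R])
    using R neu bu' nev bv' new bw' Rr1 r12 r23
    unfolding Su_def[symmetric] Sv_def[symmetric] Sw_def[symmetric] r1_def r2_def by simp
qed


theorem lemma4p1:
  fixes n :: nat and b :: real
  assumes "n \<ge> 15" and "b > 0"
  shows "\<exists>R>0.
    {r. r > 0 \<and> u_out (real n) b R r \<le> 0} \<noteq> {} \<and> bdd_above {r. r > 0 \<and> u_out (real n) b R r \<le> 0} \<and>
    {r. r > 0 \<and> v_out (real n) b R r \<le> 0} \<noteq> {} \<and> bdd_above {r. r > 0 \<and> v_out (real n) b R r \<le> 0} \<and>
    {r. r > 0 \<and> w_out (real n) b R r \<le> 0} \<noteq> {} \<and> bdd_above {r. r > 0 \<and> w_out (real n) b R r \<le> 0} \<and>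
    R < Sup {r. r > 0 \<and> u_out (real n) b R r \<le> 0} \<and>
    Sup {r. r > 0 \<and> u_out (real n) b R r \<le> 0} < Sup {r. r > 0 \<and> v_out (real n) b R r \<le> 0} \<and>
    Sup {r. r > 0 \<and> v_out (real n) b R r \<le> 0} < Sup {r. r > 0 \<and> w_out (real n) b R r \<le> 0}"
  proof -
  define x where "x = real n"
  have x: "x \<ge> 15" unfolding x_def using assms(1) by simp
  note P = params[OF x]
  define m where "m = mexp x"
  define l where "l = lexp x"
  define L where "L = Lconst x"
  have xl: "x = 2*l+6" unfolding l_def using P(3) by simp
  have m0: "0 < m" and ml: "m < l" and L0: "L > 0" using P unfolding m_def l_def L_def by auto
  have u: "u_out x b R r = L * r powr (-m) - b * r powr (-l) * ln (r/R)" for R r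
    unfolding u_out_def Let_def m_def[symmetric] l_def[symmetric] L_def[symmetric] ..
  have v: "v_out x b R r = m*(2*l+4-m)*L * r powr (-m-2) + (-l*(l+4)*ln(r/R) + 4)*b*r powr(-l-2)" for R r
    unfolding v_out_def Let_def m_def[symmetric] l_def[symmetric] L_def[symmetric]
    by (simp add: xl algebra_simps)
  have w: "w_out x b R r = m*(m+2)*(2*l+4-m)*(2*l+2-m)*L*r powr(-m-4) - l*(l+2)*(l+4)*(l+2)*b*r powr(-l-4)*ln(r/R) + 4*(l+2)*(l+2)*b*r powr(-l-4)" for R r
    unfolding w_out_def Let_def m_def[symmetric] l_def[symmetric] L_def[symmetric]
    by (simp add: xl algebra_simps)
  have G: "\<exists>R>0.
    {r. r > 0 \<and> u_out x b R r \<le> 0} \<noteq> {} \<and> bdd_above {r. r > 0 \<and> u_out x b R r \<le> 0} \<and>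
    {r. r > 0 \<and> v_out x b R r \<le> 0} \<noteq> {} \<and> bdd_above {r. r > 0 \<and> v_out x b R r \<le> 0} \<and>
    {r. r > 0 \<and> w_out x b R r \<le> 0} \<noteq> {} \<and> bdd_above {r. r > 0 \<and> w_out x b R r \<le> 0} \<and>
    R < Sup {r. r > 0 \<and> u_out x b R r \<le> 0} \<and>
    Sup {r. r > 0 \<and> u_out x b R r \<le> 0} < Sup {r. r > 0 \<and> v_out x b R r \<le> 0} \<and>
    Sup {r. r > 0 \<and> v_out x b R r \<le> 0} < Sup {r. r > 0 \<and> w_out x b R r \<le> 0}"
    by (rule generic[OF m0 ml L0 assms(2) u v w])
  then show ?thesis unfolding x_def .
qed

end
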